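(* There exists a RobMCF instance $(G,u,c,\boldsymbol b)$ with two scenarios and integral capacities (indeed $u\equiv 1$) such that no optimal solution of the continuous relaxation of the RobMCF problem is integral; i.e., the minimum cost over all real-valued robust $\boldsymbol b$-flows is strictly smaller than the minimum cost over all integral robust $\boldsymbol b$-flows.
   Context: A RobMCF instance $(G,u,c,\boldsymbol b)$ consists of a finite directed graph (parallel arcs allowed) $G=(V,A)$ whose arc set is partitioned as $A=A^{\mathrm{fix}}\cup A^{\mathrm{free}}$ into fixed and free arcs, capacities $u:A\to\mathbb Z_{\ge0}$, costs $c:A\to\mathbb Z_{\ge0}$, a finite nonempty set of scenarios $\Lambda$, and for each $\lambda\in\Lambda$ balances $b^\lambda:V\to\mathbb Z$ with $\sum_{v\in V}b^\lambda(v)=0$; $\boldsymbol b=(b^\lambda)_{\lambda\in\Lambda}$. A $b^\lambda$-flow is a function $f^\lambda:A\to\mathbb Z_{\ge0}$ with $f^\lambda(a)\le u(a)$ for all $a\in A$ and $\sum_{a=(v,w)\in A}f^\lambda(a)-\sum_{a=(w,v)\in A}f^\lambda(a)=b^\lambda(v)$ for all $v\in V$ (outflow minus inflow); its cost is $c(f^\lambda)=\sum_{a\in A}c(a)f^\lambda(a)$. A robust $\boldsymbol b$-flow is a tuple $\boldsymbol f=(f^\lambda)_{\lambda\in\Lambda}$ of $b^\lambda$-flows with $f^\lambda(a)=f^{\lambda'}(a)$ for all $a\in A^{\mathrm{fix}}$ and all $\lambda,\lambda'\in\Lambda$ (consistent flow constraints); its cost is $c(\boldsymbol f)=\max_{\lambda\in\Lambda}c(f^\lambda)$.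 The RobMCF problem asks for a robust $\boldsymbol b$-flow of minimum cost (an optimal robust $\boldsymbol b$-flow). The continuous relaxation is the same problem where the flows $f^\lambda$ may take values in $\mathbb R_{\ge 0}$ instead of $\mathbb Z_{\ge0}$. *)

theory Defs
  imports Complex_Main
begin

text \<open>A directed multigraph: vertex set V, arc set A (arcs are abstract names,
  so parallel arcs are allowed), tail and head maps.\<close>

definition robmcf_instance ::
  "nat set \<Rightarrow> nat set \<Rightarrow> nat set \<Rightarrow> (nat \<Rightarrow> nat) \<Rightarrow> (nat \<Rightarrow> nat)
   \<Rightarrow> nat set \<Rightarrow> (nat \<Rightarrow> nat \<Rightarrow> int) \<Rightarrow> bool" where
  "robmcf_instance V A Afix tail head Lam b \<longleftrightarrow>
     finite V \<and> finite A \<and> Afix \<subseteq> A \<and>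
     (\<forall>a\<in>A. tail a \<in> V \<and> head a \<in> V) \<and>
     finite Lam \<and> Lam \<noteq> {} \<and>
     (\<forall>l\<in>Lam. (\<Sum>v\<in>V. b l v) = 0)"

definition is_bflow ::
  "nat set \<Rightarrow> nat set \<Rightarrow> (nat \<Rightarrow> nat) \<Rightarrow> (nat \<Rightarrow> nat) \<Rightarrow> (nat \<Rightarrow> nat)
   \<Rightarrow> (nat \<Rightarrow> int) \<Rightarrow> (nat \<Rightarrow> real) \<Rightarrow> bool" where
  "is_bflow V A tail head u bl f \<longleftrightarrow>
     (\<forall>a\<in>A. 0 \<le> f a \<and> f a \<le> real (u a)) \<and>
     (\<forall>v\<in>V. (\<Sum>a\<in>{a\<in>A. tail a = v}. f a) - (\<Sum>a\<in>{a\<in>A. head a = v}. f a) = real_of_int (bl v))"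

definition is_robust_flow ::
  "nat set \<Rightarrow> nat set \<Rightarrow> nat set \<Rightarrow> (nat \<Rightarrow> nat) \<Rightarrow> (nat \<Rightarrow> nat) \<Rightarrow> (nat \<Rightarrow> nat)
   \<Rightarrow> nat set \<Rightarrow> (nat \<Rightarrow> nat \<Rightarrow> int) \<Rightarrow> (nat \<Rightarrow> nat \<Rightarrow> real) \<Rightarrow> bool" where
  "is_robust_flow V A Afix tail head u Lam b f \<longleftrightarrow>
     (\<forall>l\<in>Lam. is_bflow V A tail head u (b l) (f l)) \<and>
     (\<forall>a\<in>Afix. \<forall>l\<in>Lam. \<forall>l'\<in>Lam. f l a = f l' a)"

definition integral_flow :: "nat set \<Rightarrow> nat set \<Rightarrow> (nat \<Rightarrow> nat \<Rightarrow> real) \<Rightarrow> bool" where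
  "integral_flow A Lam f \<longleftrightarrow> (\<forall>l\<in>Lam. \<forall>a\<in>A. f l a \<in> \<int>)"

definition flow_cost :: "nat set \<Rightarrow> (nat \<Rightarrow> nat) \<Rightarrow> (nat \<Rightarrow> real) \<Rightarrow> real" where
  "flow_cost A c fl = (\<Sum>a\<in>A. real (c a) * fl a)"

definition robust_cost ::
  "nat set \<Rightarrow> (nat \<Rightarrow> nat) \<Rightarrow> nat set \<Rightarrow> (nat \<Rightarrow> nat \<Rightarrow> real) \<Rightarrow> real" where
  "robust_cost A c Lam f = Max ((\<lambda>l. flow_cost A c (f l)) ` Lam)"

end

theory Submission
  imports Defs
begin

definition tl0 :: "nat \<Rightarrow> nat" where "tl0 a = (if a = 2 then 1 else 0)"
definition hd0 :: "nat \<Rightarrow> nat" where "hd0 a = (if a = 2 then 0 else 1)"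
definition cc0 :: "nat \<Rightarrow> nat" where "cc0 a = (if a = 0 then 0 else 2)"
definition bb0 :: "nat \<Rightarrow> nat \<Rightarrow> int" where
  "bb0 l v = (if l = 0 then (if v = 0 then 1 else -1) else 0)"

lemma sets0:
  "{a\<in>{0,1,2::nat}. tl0 a = 0} = {0,1}"
  "{a\<in>{0,1,2::nat}. tl0 a = 1} = {2}"
  "{a\<in>{0,1,2::nat}. hd0 a = 0} = {2}"
  "{a\<in>{0,1,2::nat}. hd0 a = 1} = {0,1}"
  by (auto simp: tl0_def hd0_def)

lemma bflow_iff:
  "is_bflow {0,1} {0,1,2} tl0 hd0 (\<lambda>_. 1) bl f \<longleftrightarrow>
    (\<forall>a\<in>{0,1,2::nat}. 0 \<le> f a \<and> f a \<le> 1) \<and>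
    f 0 + f 1 - f 2 = real_of_int (bl 0) \<and> f 2 - (f 0 + f 1) = real_of_int (bl 1)"
  unfolding is_bflow_def ball_simps(7) ball_empty sets0 by simp

lemma cost_eq: "flow_cost {0,1,2} cc0 fl = 2 * fl 1 + 2 * fl 2"
  unfolding flow_cost_def by (simp add: cc0_def)

lemma rc_eq: "robust_cost {0,1,2} cc0 {0,1} f = max (2 * f 0 1 + 2 * f 0 2) (2 * f 1 1 + 2 * f 1 2)"
  unfolding robust_cost_def image_insert image_empty cost_eq by simp

theorem mainTheorem1:
  shows "\<exists>V A Afix tail head u c Lam b.
     robmcf_instance V A Afix tail head Lam b \<and> card Lam = 2 \<and> (\<forall>a\<in>A. u a = 1) \<and>
     (\<exists>g. is_robust_flow V A Afix tail head u Lam b g \<and> integral_flow A Lam g) \<and>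
     (\<exists>f. is_robust_flow V A Afix tail head u Lam b f \<and>
        (\<forall>g. is_robust_flow V A Afix tail head u Lam b g \<and> integral_flow A Lam g \<longrightarrow>
             robust_cost A c Lam f < robust_cost A c Lam g))"
proof -
  let ?V = "{0,1::nat}" and ?A = "{0,1,2::nat}" and ?L = "{0,1::nat}"
  have inst: "robmcf_instance ?V ?A {0} tl0 hd0 ?L bb0"
    unfolding robmcf_instance_def by (auto simp: tl0_def hd0_def bb0_def)
  define g0 :: "nat \<Rightarrow> nat \<Rightarrow> real" where "g0 = (\<lambda>l a. if l = 0 \<and> a = 1 then 1 else 0)"
  have g0r: "is_robust_flow ?V ?A {0} tl0 hd0 (\<lambda>_. 1) ?L bb0 g0"
    unfolding is_robust_flow_def ball_simps(7) ball_empty bflow_iff by (auto simp: g0_def bb0_def)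
  have g0i: "integral_flow ?A ?L g0"
    unfolding integral_flow_def g0_def by auto
  define f :: "nat \<Rightarrow> nat \<Rightarrow> real" where
    "f = (\<lambda>l a. if a = 0 then 1/2 else if l = 0 \<and> a = 1 then 1/2 else if l = 1 \<and> a = 2 then 1/2 else 0)"
  have fr: "is_robust_flow ?V ?A {0} tl0 hd0 (\<lambda>_. 1) ?L bb0 f"
    unfolding is_robust_flow_def ball_simps(7) ball_empty bflow_iff by (auto simp: f_def bb0_def)
  have fc: "robust_cost ?A cc0 ?L f = 1"
    unfolding rc_eq by (simp add: f_def)
  have key: "robust_cost ?A cc0 ?L f < robust_cost ?A cc0 ?L g"
    if gr: "is_robust_flow ?V ?A {0} tl0 hd0 (\<lambda>_. 1) ?L bb0 g" and gi: "integral_flow ?A ?L g" for g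
  proof -
    have b0: "is_bflow ?V ?A tl0 hd0 (\<lambda>_. 1) (bb0 0) (g 0)"
      and b1: "is_bflow ?V ?A tl0 hd0 (\<lambda>_. 1) (bb0 1) (g 1)"
      and fx: "g 0 0 = g 1 0"
      using gr unfolding is_robust_flow_def by blast+
    have e0: "g 0 0 + g 0 1 - g 0 2 = 1" and n0: "\<forall>a\<in>?A. 0 \<le> g 0 a \<and> g 0 a \<le> 1"
      using b0 unfolding bflow_iff bb0_def by simp_all
    have e1: "g 1 0 + g 1 1 - g 1 2 = 0" and n1: "\<forall>a\<in>?A. 0 \<le> g 1 a \<and> g 1 a \<le> 1"
    proof -
      have h: "(\<forall>a\<in>?A. 0 \<le> g 1 a \<and> g 1 a \<le> 1) \<and> g 1 0 + g 1 1 - g 1 2 = real_of_int (bb0 1 0)"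
        using b1 unfolding bflow_iff by blast
      have "bb0 1 0 = 0" by (simp add: bb0_def)
      thus "g 1 0 + g 1 1 - g 1 2 = 0" "\<forall>a\<in>?A. 0 \<le> g 1 a \<and> g 1 a \<le> 1" using h by simp_all
    qed
    have "g 0 0 \<in> \<int>" using gi unfolding integral_flow_def by auto
    then obtain k where k: "g 0 0 = of_int k" by (auto elim: Ints_cases)
    have "0 \<le> k" "k \<le> 1" using n0 k by force+
    hence "k = 0 \<or> k = 1" by auto
    hence "g 0 0 = 0 \<or> g 0 0 = 1" using k by auto
    hence "2 \<le> max (2 * g 0 1 + 2 * g 0 2) (2 * g 1 1 + 2 * g 1 2)"
    proof
      assume "g 0 0 = 0"
      hence "g 0 1 \<ge> 1" using e0 n0 by simp
      moreover have "g 0 2 \<ge> 0" using n0 by simp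
      ultimately show ?thesis by linarith
    next
      assume "g 0 0 = 1"
      hence "g 1 2 \<ge> 1" using e1 n1 fx by simp
      moreover have "g 1 1 \<ge> 0" using n1 by simp
      ultimately show ?thesis by linarith
    qed
    thus ?thesis using fc unfolding rc_eq by linarith
  qed
  have "card ?L = 2" by simp
  moreover have "\<forall>a\<in>?A. (\<lambda>_. 1::nat) a = 1" by simp
  moreover have "\<exists>g. is_robust_flow ?V ?A {0} tl0 hd0 (\<lambda>_. 1) ?L bb0 g \<and> integral_flow ?A ?L g"
    using g0r g0i by blast
  moreover have "\<exists>f. is_robust_flow ?V ?A {0} tl0 hd0 (\<lambda>_. 1) ?L bb0 f \<and>
        (\<forall>g. is_robust_flow ?V ?A {0} tl0 hd0 (\<lambda>_. 1) ?L bb0 g \<and> integral_flow ?A ?L g \<longrightarrow>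
             robust_cost ?A cc0 ?L f < robust_cost ?A cc0 ?L g)"
    using fr key by blast
  ultimately have all: "robmcf_instance ?V ?A {0} tl0 hd0 ?L bb0 \<and> card ?L = 2 \<and> (\<forall>a\<in>?A. (\<lambda>_. 1::nat) a = 1) \<and>
     (\<exists>g. is_robust_flow ?V ?A {0} tl0 hd0 (\<lambda>_. 1) ?L bb0 g \<and> integral_flow ?A ?L g) \<and>
     (\<exists>f. is_robust_flow ?V ?A {0} tl0 hd0 (\<lambda>_. 1) ?L bb0 f \<and>
        (\<forall>g. is_robust_flow ?V ?A {0} tl0 hd0 (\<lambda>_. 1) ?L bb0 g \<and> integral_flow ?A ?L g \<longrightarrow>
             robust_cost ?A cc0 ?L f < robust_cost ?A cc0 ?L g))"
    using inst by (intro conjI)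
  show ?thesis
    apply (rule exI[of _ ?V], rule exI[of _ ?A], rule exI[of _ "{0}"], rule exI[of _ tl0],
           rule exI[of _ hd0], rule exI[of _ "\<lambda>_. 1::nat"], rule exI[of _ cc0], rule exI[of _ ?L],
           rule exI[of _ bb0])
    by (rule all)
qed

end
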